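(* Let $\Phi$ be a real $N\times d$ matrix satisfying the Restricted Isometry Condition with parameters $(2n,\varepsilon)$, $\varepsilon = 0.03/\sqrt{\log n}$, let $v \ne 0$ be $n$-sparse, $x = \Phi v$, and consider an iteration of ROMP run on $x$ with sparsity level $n$, with $I$ the index set and $r\ne 0$ the residual at the start of that iteration. Let $v_0 = v|_{\mathrm{supp}(v)\setminus I}$ (equal to $v$ on $\mathrm{supp}(v)\setminus I$, $0$ elsewhere), $x_0 = \Phi v_0$, $u_0 = \Phi^* x_0$ and $u = \Phi^* r$. Then for every set $T \subset \{1,\dots,d\}$ with $|T|\le 2n$, $\|(u_0 - u)|_T\|_2 \le 2.4\,\varepsilon\,\|v_0\|_2$.
   Context: A vector is $n$-sparse if it has at most $n$ nonzero coordinates. $\Phi$ satisfies the Restricted Isometry Condition with parameters $(m,\varepsilon)$ if $(1-\varepsilon)\|w\|_2 \le \|\Phi w\|_2 \le (1+\varepsilon)\|w\|_2$ for all $m$-sparse $w$. $y|_T$ is the restriction of $y$ to coordinates in $T$. ROMP with input $x$ and sparsity level $n$: Initialize $I=\emptyset$, $r=x$. Repeat until $r=0$: (Identify) $u=\Phi^*r$, choose a set $J$ of the $n$ biggest coordinates of $u$ in magnitude, or all nonzero coordinates of $u$, whichever set is smaller; (Regularize) among subsets $J_0\subset J$ with $|u(i)|\le 2|u(j)|$ for all $i,j\in J_0$, choose one maximizing $\|u|_{J_0}\|_2$; (Update) $I\leftarrow I\cup J_0$, $y=\operatorname{argmin}_{z\in\mathbb{R}^I}\|x-\Phi z\|_2$,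 $r=x-\Phi y$. Output $I$. *)

theory Defs
  imports "HOL-Analysis.Analysis"
begin

text \<open>Vectors in R^d are modelled as real^'d, an N x d matrix as real^'d^'N.
  Coordinates are indexed by the finite type 'd (playing the role of {1..d}).\<close>

definition support :: "real^'d \<Rightarrow> 'd set" where
  "support w = {i. w $ i \<noteq> 0}"

definition sparse :: "nat \<Rightarrow> real^'d \<Rightarrow> bool" where
  "sparse m w \<longleftrightarrow> card (support w) \<le> m"

definition restr :: "'d set \<Rightarrow> real^'d \<Rightarrow> real^'d" where
  "restr T y = (\<chi> i. if i \<in> T then y $ i else 0)"

definition RIC :: "real^'d^'N \<Rightarrow> nat \<Rightarrow> real \<Rightarrow> bool" where
  "RIC Phi m eps \<longleftrightarrow> (\<forall>w. sparse m w \<longrightarrow>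
      (1 - eps) * norm w \<le> norm (Phi *v w) \<and> norm (Phi *v w) \<le> (1 + eps) * norm w)"

text \<open>Identify step: J is a set of the n biggest coordinates of u in magnitude,
  or all nonzero coordinates of u, whichever set is smaller (ties broken arbitrarily).\<close>
definition identify_ok :: "nat \<Rightarrow> real^'d \<Rightarrow> 'd set \<Rightarrow> bool" where
  "identify_ok n u J \<longleftrightarrow> J \<subseteq> support u \<and> card J = min n (card (support u)) \<and>
      (\<forall>i\<in>J. \<forall>j. j \<notin> J \<longrightarrow> \<bar>u $ j\<bar> \<le> \<bar>u $ i\<bar>)"

definition comparable :: "real^'d \<Rightarrow> 'd set \<Rightarrow> bool" where
  "comparable u J0 \<longleftrightarrow> (\<forall>i\<in>J0. \<forall>j\<in>J0. \<bar>u $ i\<bar> \<le> 2 * \<bar>u $ j\<bar>)"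

definition regularize_ok :: "real^'d \<Rightarrow> 'd set \<Rightarrow> 'd set \<Rightarrow> bool" where
  "regularize_ok u J J0 \<longleftrightarrow> J0 \<subseteq> J \<and> comparable u J0 \<and>
      (\<forall>J1. J1 \<subseteq> J \<longrightarrow> comparable u J1 \<longrightarrow> norm (restr J1 u) \<le> norm (restr J0 u))"

definition lsq_min :: "real^'d^'N \<Rightarrow> real^'N \<Rightarrow> 'd set \<Rightarrow> real^'d \<Rightarrow> bool" where
  "lsq_min Phi x I y \<longleftrightarrow> support y \<subseteq> I \<and>
      (\<forall>z. support z \<subseteq> I \<longrightarrow> norm (x - Phi *v y) \<le> norm (x - Phi *v z))"

definition romp_step :: "real^'d^'N \<Rightarrow> nat \<Rightarrow> real^'N \<Rightarrow> ('d set \<times> (real^'N)) \<Rightarrow> ('d set \<times> (real^'N)) \<Rightarrow> bool" where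
  "romp_step Phi n x s s' \<longleftrightarrow> snd s \<noteq> 0 \<and>
     (let u = transpose Phi *v snd s in
      \<exists>J J0 y. identify_ok n u J \<and> regularize_ok u J J0 \<and>
        fst s' = fst s \<union> J0 \<and> lsq_min Phi x (fst s') y \<and> snd s' = x - Phi *v y)"

inductive romp_reach :: "real^'d^'N \<Rightarrow> nat \<Rightarrow> real^'N \<Rightarrow> ('d set \<times> (real^'N)) \<Rightarrow> bool"
  for Phi n x where
  init: "romp_reach Phi n x ({}, x)"
| step: "romp_reach Phi n x s \<Longrightarrow> romp_step Phi n x s s' \<Longrightarrow> romp_reach Phi n x s'"

end

theory Submission
  imports Defs
begin
lemma support_add: "support (a + b) \<subseteq> support a \<union> support b"
  by (auto simp: support_def)
lemma support_diff: "support (a - b) \<subseteq> support a \<union> support b"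
  by (auto simp: support_def)
lemma support_scale: "support (c *\<^sub>R a) \<subseteq> support a"
  by (auto simp: support_def)
lemma inner_disjoint: "support a \<inter> support b = {} \<Longrightarrow> inner a b = 0"
  unfolding inner_vec_def support_def
  by (rule sum.neutral) auto
lemma sparse_mono: "support a \<subseteq> S \<Longrightarrow> card S \<le> m \<Longrightarrow> sparse m a"
  unfolding sparse_def by (meson card_mono dual_order.trans finite)

lemma ric_upper: "RIC Phi m e \<Longrightarrow> sparse m w \<Longrightarrow> 0 \<le> 1 + e \<Longrightarrow>
   norm (Phi *v w)^2 \<le> (1+e)^2 * norm w^2"
  unfolding RIC_def by (metis norm_ge_zero power_mono power_mult_distrib)
lemma ric_lower: "RIC Phi m e \<Longrightarrow> sparse m w \<Longrightarrow> 0 \<le> 1 - e \<Longrightarrow>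
   (1-e)^2 * norm w^2 \<le> norm (Phi *v w)^2"
  unfolding RIC_def by (metis mult_nonneg_nonneg norm_ge_zero power_mono power_mult_distrib)

lemma near_orth:
  fixes Phi :: "real^'d^'N"
  assumes ric: "RIC Phi m e" and e0: "0 \<le> e" and e1: "e \<le> 1"
    and disj: "support a \<inter> support b = {}" and card: "card (support a \<union> support b) \<le> m"
  shows "\<bar>inner (Phi *v a) (Phi *v b)\<bar> \<le> 2*e*norm a*norm b"
proof (cases "a = 0 \<or> b = 0")
  case True then show ?thesis by auto
next
  case False
  define \<alpha> where "\<alpha> = norm a"
  define \<beta> where "\<beta> = norm b"
  have ap: "\<alpha> > 0" "\<beta> > 0" using False by (auto simp: \<alpha>_def \<beta>_def)
  define x where "x = \<beta> *\<^sub>R a + \<alpha> *\<^sub>R b"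
  define y where "y = \<beta> *\<^sub>R a - \<alpha> *\<^sub>R b"
  have ab0: "inner a b = 0" using disj by (rule inner_disjoint)
  have aa: "inner a a = \<alpha>^2" "inner b b = \<beta>^2" by (simp_all add: \<alpha>_def \<beta>_def power2_norm_eq_inner)
  have nx: "norm x^2 = 2*\<alpha>^2*\<beta>^2"
  proof -
    have "norm x^2 = inner x x" by (simp add: power2_norm_eq_inner)
    also have "\<dots> = \<beta>^2 * inner a a + \<alpha>^2 * inner b b + 2*\<alpha>*\<beta>*inner a b"
      unfolding x_def by (simp add: inner_add_left inner_add_right inner_commute power2_eq_square algebra_simps)
    finally show ?thesis using aa ab0 by simp
  qed
  have ny: "norm y^2 = 2*\<alpha>^2*\<beta>^2"
  proof -
    have "norm y^2 = inner y y" by (simp add: power2_norm_eq_inner)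
    also have "\<dots> = \<beta>^2 * inner a a + \<alpha>^2 * inner b b - 2*\<alpha>*\<beta>*inner a b"
      unfolding y_def by (simp add: inner_diff_left inner_diff_right inner_commute power2_eq_square algebra_simps)
    finally show ?thesis using aa ab0 by simp
  qed
  have sx: "sparse m x" unfolding x_def
    by (rule sparse_mono[OF _ card]) (meson order_trans support_add support_scale Un_mono)
  have sy: "sparse m y" unfolding y_def
    by (rule sparse_mono[OF _ card]) (meson order_trans support_diff support_scale Un_mono)
  have px: "norm (Phi *v x)^2 \<le> (1+e)^2 * (2*\<alpha>^2*\<beta>^2)"
    using ric_upper[OF ric sx] e0 nx by simp
  have py: "(1-e)^2 * (2*\<alpha>^2*\<beta>^2) \<le> norm (Phi *v y)^2"
    using ric_lower[OF ric sy] e1 ny by simp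
  have px': "(1-e)^2 * (2*\<alpha>^2*\<beta>^2) \<le> norm (Phi *v x)^2"
    using ric_lower[OF ric sx] e1 nx by simp
  have py': "norm (Phi *v y)^2 \<le> (1+e)^2 * (2*\<alpha>^2*\<beta>^2)"
    using ric_upper[OF ric sy] e0 ny by simp
  define c where "c = inner (Phi *v a) (Phi *v b)"
  have diff: "norm (Phi *v x)^2 - norm (Phi *v y)^2 = 4*\<alpha>*\<beta>*c"
  proof -
    have e1: "Phi *v x = \<beta> *\<^sub>R (Phi *v a) + \<alpha> *\<^sub>R (Phi *v b)"
      by (simp add: x_def matrix_vector_right_distrib matrix_vector_mult_scaleR)
    have e2: "Phi *v y = \<beta> *\<^sub>R (Phi *v a) - \<alpha> *\<^sub>R (Phi *v b)"
      by (simp add: y_def matrix_vector_mult_diff_distrib matrix_vector_mult_scaleR)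
    show ?thesis unfolding power2_norm_eq_inner e1 e2 c_def
      by (simp add: inner_add_left inner_add_right inner_diff_left inner_diff_right inner_commute algebra_simps)
  qed
  have kp: "4*\<alpha>*\<beta> > 0" using ap by simp
  have "(4*\<alpha>*\<beta>)*(c - 2*e*\<alpha>*\<beta>) \<le> 0"
  proof -
    have "norm (Phi *v x)^2 - norm (Phi *v y)^2 \<le> (1+e)^2 * (2*\<alpha>^2*\<beta>^2) - (1-e)^2 * (2*\<alpha>^2*\<beta>^2)"
      using px py by linarith
    also have "\<dots> = 4*\<alpha>*\<beta>*(2*e*\<alpha>*\<beta>)" by (simp add: power2_eq_square algebra_simps)
    finally show ?thesis using diff by (simp add: algebra_simps)
  qed
  hence u: "c \<le> 2*e*\<alpha>*\<beta>" by (metis kp diff_le_0_iff_le linorder_not_le mult_pos_pos)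
  have "(4*\<alpha>*\<beta>)*(-c - 2*e*\<alpha>*\<beta>) \<le> 0"
  proof -
    have "norm (Phi *v y)^2 - norm (Phi *v x)^2 \<le> (1+e)^2 * (2*\<alpha>^2*\<beta>^2) - (1-e)^2 * (2*\<alpha>^2*\<beta>^2)"
      using px' py' by linarith
    also have "\<dots> = 4*\<alpha>*\<beta>*(2*e*\<alpha>*\<beta>)" by (simp add: power2_eq_square algebra_simps)
    finally show ?thesis using diff by (simp add: algebra_simps)
  qed
  hence l: "-c \<le> 2*e*\<alpha>*\<beta>" by (metis kp diff_le_0_iff_le linorder_not_le mult_pos_pos)
  show ?thesis using u l by (simp add: c_def \<alpha>_def \<beta>_def)
qed
lemma lsq_orth:
  fixes Phi :: "real^'d^'N"
  assumes lsq: "lsq_min Phi x I y" and sz: "support z \<subseteq> I"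
  shows "inner (x - Phi *v y) (Phi *v z) = 0"
proof -
  define r where "r = x - Phi *v y"
  define w where "w = Phi *v z"
  define a where "a = inner r w"
  define b where "b = inner w w"
  have b0: "b \<ge> 0" by (simp add: b_def)
  define t where "t = a / (b+1)"
  have "support (y + t *\<^sub>R z) \<subseteq> I"
    using lsq sz support_add[of y "t *\<^sub>R z"] support_scale[of t z] unfolding lsq_min_def by blast
  hence "norm r \<le> norm (x - Phi *v (y + t *\<^sub>R z))" using lsq unfolding lsq_min_def r_def by blast
  also have "x - Phi *v (y + t *\<^sub>R z) = r - t *\<^sub>R w"
    by (simp add: r_def w_def matrix_vector_right_distrib matrix_vector_mult_scaleR)
  finally have "norm r^2 \<le> norm (r - t *\<^sub>R w)^2" by (simp add: power_mono)
  hence "inner r r \<le> inner (r - t *\<^sub>R w) (r - t *\<^sub>R w)" by (simp add: power2_norm_eq_inner)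
  hence "0 \<le> t*t*b - 2*t*a"
    by (simp add: inner_diff_left inner_diff_right inner_commute a_def b_def algebra_simps)
  moreover have ta: "a = t*(b+1)" using b0 by (simp add: t_def)
  ultimately have h: "0 \<le> t*t*b - 2*t*(t*(b+1))" by simp
  have "t*t*b - 2*t*(t*(b+1)) = -((b+2)*(t*t))" by (simp add: algebra_simps)
  with h have "(b+2)*(t*t) \<le> 0" by linarith
  moreover have "b + 2 > 0" using b0 by simp
  ultimately have "t*t \<le> 0" by (simp add: mult_le_0_iff)
  hence "t = 0" by (auto simp: mult_le_0_iff)
  hence "a = 0" using ta by simp
  thus ?thesis by (simp add: a_def r_def w_def)
qed

lemma inner_transpose: "inner (transpose (A::real^'d^'N) *v w) z = inner w (A *v z)"
  by (simp add: dot_lmul_matrix)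

lemma norm_restr_sq: "norm (restr T a)^2 = (\<Sum>i\<in>T. (a$i)^2)"
proof -
  have "norm (restr T a)^2 = inner (restr T a) (restr T a)" by (simp add: dot_square_norm)
  also have "\<dots> = (\<Sum>i\<in>UNIV. if i \<in> T then (a$i)^2 else 0)"
    by (simp add: inner_vec_def restr_def power2_eq_square if_distrib cong: if_cong)
  also have "\<dots> = (\<Sum>i\<in>T. (a$i)^2)" by (simp add: sum.If_cases)
  finally show ?thesis .
qed

lemma support_restr: "support (restr T a) \<subseteq> T"
  by (auto simp: support_def restr_def)

lemma restr_diff: "restr T (a - b) = restr T a - restr T b"
  by (simp add: restr_def vec_eq_iff)

lemma inner_restr_supp: "support z \<subseteq> T \<Longrightarrow> inner (restr T a) z = inner a z"
  unfolding inner_vec_def restr_def support_def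
  by (rule sum.cong) auto

lemma restr_split: "restr (support v - I) v + restr I v = v"
  by (simp add: restr_def support_def vec_eq_iff)

lemma consist:
  fixes Phi :: "real^'d^'N" and v y :: "real^'d"
  assumes ric: "RIC Phi (2*n) e" and e0: "0 \<le> e" and e1: "e < 1"
    and lsq: "lsq_min Phi (Phi *v v) I y"
    and card: "card (I \<union> support v) \<le> 2*n"
    and cT: "card T \<le> 2*n"
  shows "(1-e) * norm (restr T (transpose Phi *v (Phi *v restr (support v - I) v) - transpose Phi *v (Phi *v v - Phi *v y)))
          \<le> 2*e*(1+e) * norm (restr (support v - I) v)"
proof -
  define v0 where "v0 = restr (support v - I) v"
  define r where "r = Phi *v v - Phi *v y"
  define y' where "y' = y - restr I v"
  define w where "w = Phi *v v0 - r"
  have vsplit: "v = v0 + restr I v" using restr_split[of v I] by (simp add: v0_def)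
  have "Phi *v v = Phi *v (v0 + restr I v)" using vsplit by (rule arg_cong)
  hence pv: "Phi *v v = Phi *v v0 + Phi *v restr I v" by (simp add: matrix_vector_right_distrib)
  have wy: "w = Phi *v y'"
    unfolding w_def r_def y'_def pv by (simp add: matrix_vector_mult_diff_distrib)
  have sy: "support y \<subseteq> I" using lsq by (simp add: lsq_min_def)
  have sy': "support y' \<subseteq> I" unfolding y'_def using sy support_diff[of y "restr I v"] support_restr[of I v] by blast
  have sv0: "support v0 \<subseteq> support v - I" unfolding v0_def by (rule support_restr)
  have orth: "inner r (Phi *v y') = 0" using lsq_orth[OF lsq sy'] by (simp add: r_def)
  have cI: "card I \<le> 2*n" using card card_mono[of "I \<union> support v" I] by simp
  have "norm w^2 = inner w w" by (simp add: power2_norm_eq_inner)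
  also have "\<dots> = inner (Phi *v y') (Phi *v v0)"
    using orth by (simp add: w_def wy[symmetric] inner_diff_right inner_commute)
  also have "\<dots> \<le> 2*e*norm y'*norm v0"
  proof -
    have h1: "support y' \<inter> support v0 = {}" using sy' sv0 by blast
    have h2: "card (support y' \<union> support v0) \<le> 2*n"
    proof -
      have "support y' \<union> support v0 \<subseteq> I \<union> support v" using sy' sv0 by blast
      thus ?thesis using card card_mono[of "I \<union> support v" "support y' \<union> support v0"] by simp
    qed
    have "\<bar>inner (Phi *v y') (Phi *v v0)\<bar> \<le> 2*e*norm y'*norm v0"
      by (rule near_orth[OF ric e0 _ h1 h2]) (use e1 in simp)
    thus ?thesis by (rule abs_le_D1)
  qed
  finally have w2: "norm w^2 \<le> 2*e*norm y'*norm v0" .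
  have ricA: "\<forall>w. sparse (2*n) w \<longrightarrow> (1 - e) * norm w \<le> norm (Phi *v w) \<and> norm (Phi *v w) \<le> (1 + e) * norm w"
    using ric by (simp add: RIC_def)
  have "(1-e)*norm y' \<le> norm (Phi *v y')"
    using ricA[rule_format, OF sparse_mono[OF sy' cI]] by (rule conjunct1)
  hence "(1-e)*norm y' \<le> norm w" by (simp add: wy)
  hence wb: "(1-e)*norm w \<le> 2*e*norm v0"
  proof -
    assume h: "(1-e)*norm y' \<le> norm w"
    have "(1-e)*norm w^2 \<le> (1-e)*(2*e*norm y'*norm v0)" using w2 e1 by (simp add: mult_left_mono)
    also have "\<dots> = 2*e*((1-e)*norm y')*norm v0" by (simp add: algebra_simps)
    also have "\<dots> \<le> 2*e*norm w*norm v0" using h e0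
      by (simp add: mult_left_mono mult_right_mono)
    finally have "norm w * ((1-e)*norm w) \<le> norm w * (2*e*norm v0)" by (simp add: power2_eq_square algebra_simps)
    show ?thesis
    proof (cases "norm w = 0")
      case True thus ?thesis using e0 by simp
    next
      case False hence "norm w > 0" by simp
      thus ?thesis using \<open>norm w * ((1-e)*norm w) \<le> norm w * (2*e*norm v0)\<close> by simp
    qed
  qed
  define z where "z = restr T (transpose Phi *v w)"
  have sz: "support z \<subseteq> T" unfolding z_def by (rule support_restr)
  have "norm z^2 = inner z z" by (simp add: power2_norm_eq_inner)
  also have "\<dots> = inner (transpose Phi *v w) z" unfolding z_def by (rule inner_restr_supp[OF sz[unfolded z_def]])
  also have "\<dots> = inner w (Phi *v z)" by (rule inner_transpose)
  also have "\<dots> \<le> norm w * norm (Phi *v z)" by (rule Cauchy_Schwarz_ineq2[THEN abs_le_D1])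
  also have "\<dots> \<le> norm w * ((1+e)*norm z)"
    using ricA[rule_format, OF sparse_mono[OF sz cT]] by (simp add: mult_left_mono)
  finally have "norm z * norm z \<le> norm z * ((1+e)*norm w)" by (simp add: power2_eq_square algebra_simps)
  hence zb: "norm z \<le> (1+e)*norm w"
  proof (cases "norm z = 0")
    case True thus ?thesis using e0 by simp
  next
    case False hence "norm z > 0" by simp
    thus ?thesis using \<open>norm z * norm z \<le> norm z * ((1+e)*norm w)\<close> by simp
  qed
  have "(1-e)*norm z \<le> (1-e)*((1+e)*norm w)" by (rule mult_left_mono[OF zb]) (use e1 in simp)
  also have "\<dots> = (1+e)*((1-e)*norm w)" by simp
  also have "\<dots> \<le> (1+e)*(2*e*norm v0)" using wb e0 by (simp add: mult_left_mono)
  also have "\<dots> = 2*e*(1+e)*norm v0" by simp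
  finally have calc: "(1-e)*norm z \<le> 2*e*(1+e)*norm v0" .
  have eq: "transpose Phi *v (Phi *v v0) - transpose Phi *v r = transpose Phi *v w"
    by (simp add: w_def matrix_vector_mult_diff_distrib)
  show ?thesis unfolding v0_def[symmetric] r_def[symmetric] eq z_def[symmetric] by (rule calc)
qed
lemma dyadic:
  fixes u :: "real^'d" and J :: "'d set"
  assumes cJ: "card J \<le> n" and nj: "real n \<le> 4^j"
  shows "\<exists>A\<subseteq>J. comparable u A \<and> 3*(\<Sum>i\<in>J. (u$i)^2) \<le> 4*real (j+1)*(\<Sum>i\<in>A. (u$i)^2)"
proof (cases "J = {}")
  case True
  thus ?thesis by (intro exI[of _ "{}"]) (simp add: comparable_def)
next
  case False
  define f where "f i = (u$i)^2" for i
  define m where "m = Max ((\<lambda>i. \<bar>u$i\<bar>) ` J)"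
  have fin: "finite J" by simp
  have am: "\<And>i. i \<in> J \<Longrightarrow> \<bar>u$i\<bar> \<le> m" unfolding m_def using fin by (simp add: Max_ge)
  have "m \<in> (\<lambda>i. \<bar>u$i\<bar>) ` J" unfolding m_def using fin False by (intro Max_in) auto
  then obtain i0 where i0: "i0 \<in> J" "\<bar>u$i0\<bar> = m" by auto
  have m0: "m \<ge> 0" using i0 by auto
  have mJ: "m^2 \<le> sum f J"
  proof -
    have "f i0 = \<bar>u$i0\<bar>^2" by (simp add: f_def)
    hence "m^2 = f i0" using i0 by simp
    also have "\<dots> \<le> sum f J" using i0 fin by (intro member_le_sum) (auto simp: f_def)
    finally show ?thesis .
  qed
  define lev where "lev l = {i\<in>J. m/2^(l+1) < \<bar>u$i\<bar> \<and> \<bar>u$i\<bar> \<le> m/2^l}" for l :: nat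
  define U where "U k = {i\<in>J. m/2^k < \<bar>u$i\<bar>}" for k :: nat
  have Usum: "sum f (U k) = (\<Sum>l<k. sum f (lev l))" for k
  proof (induction k)
    case 0
    have "U 0 = {}" using am by (force simp: U_def)
    thus ?case by simp
  next
    case (Suc k)
    have "U (Suc k) = U k \<union> lev k"
    proof -
      have "m/2^(Suc k) \<le> m/2^k" using m0 by (simp add: divide_left_mono)
      thus ?thesis unfolding U_def lev_def by auto
    qed
    moreover have "U k \<inter> lev k = {}" unfolding U_def lev_def by auto
    ultimately have "sum f (U (Suc k)) = sum f (U k) + sum f (lev k)"
      by (simp add: sum.union_disjoint U_def lev_def)
    thus ?case using Suc by simp
  qed
  define K where "K = j+1"
  define B where "B = J - U K"
  have JUB: "sum f J = sum f (U K) + sum f B"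
  proof -
    have "J = U K \<union> B" "U K \<inter> B = {}" by (auto simp: B_def U_def)
    thus ?thesis by (simp add: sum.union_disjoint[symmetric])
  qed
  have Bb: "sum f B \<le> m^2/4"
  proof -
    have "\<forall>i\<in>B. f i \<le> (m/2^K)^2"
    proof
      fix i assume "i \<in> B"
      hence "\<bar>u$i\<bar> \<le> m/2^K" by (auto simp: B_def U_def)
      hence "\<bar>u$i\<bar>^2 \<le> (m/2^K)^2" by (rule power_mono) simp
      thus "f i \<le> (m/2^K)^2" by (simp add: f_def)
    qed
    hence "sum f B \<le> real (card B) * (m/2^K)^2" by (intro sum_bounded_above) blast
    also have "\<dots> \<le> real n * (m/2^K)^2"
    proof -
      have "card B \<le> n" using cJ card_mono[of J B] by (auto simp: B_def)
      thus ?thesis by (simp add: mult_right_mono)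
    qed
    also have "\<dots> = real n * m^2 / (4*4^j)"
    proof -
      have "(2::real)^K * 2^K = (2*2)^K" by (rule power_mult_distrib[symmetric])
      also have "\<dots> = 4*4^j" by (simp add: K_def)
      finally have "(m/2^K)^2 = m^2 / (4*4^j)" by (simp add: power2_eq_square)
      thus ?thesis by simp
    qed
    also have "\<dots> \<le> 4^j * m^2 / (4*4^j)"
    proof -
      have "real n * m^2 \<le> 4^j * m^2" using nj by (rule mult_right_mono) simp
      thus ?thesis by (rule divide_right_mono) simp
    qed
    also have "\<dots> = m^2/4" by simp
    finally show ?thesis .
  qed
  define g where "g l = sum f (lev l)" for l
  have "Max (g ` {..<K}) \<in> g ` {..<K}" by (intro Max_in) (auto simp: K_def)
  then obtain l where l: "l \<in> {..<K}" "g l = Max (g ` {..<K})" by (metis imageE)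
  have "(\<Sum>l<K. g l) \<le> real (card {..<K}) * g l"
    using l by (intro sum_bounded_above) (simp add: Max_ge)
  hence sK: "(\<Sum>l<K. g l) \<le> real K * g l" by simp
  have "3 * sum f J \<le> 4 * (\<Sum>l<K. g l)"
    using JUB Bb mJ Usum[of K] by (simp add: g_def)
  also have "\<dots> \<le> 4 * real K * g l" using sK by simp
  finally have main: "3 * sum f J \<le> 4 * real K * g l" .
  have comp: "comparable u (lev l)"
    unfolding comparable_def
  proof (intro ballI)
    fix a b assume "a \<in> lev l" "b \<in> lev l"
    hence "\<bar>u$a\<bar> \<le> m/2^l" "m/2^(l+1) < \<bar>u$b\<bar>" by (auto simp: lev_def)
    moreover have "m/2^l = 2*(m/2^(l+1))" by simp
    ultimately show "\<bar>u$a\<bar> \<le> 2*\<bar>u$b\<bar>" by linarith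
  qed
  show ?thesis
    by (intro exI[of _ "lev l"]) (use comp main in \<open>auto simp: lev_def g_def f_def K_def\<close>)
qed

lemma topn:
  fixes u :: "real^'d"
  assumes idf: "identify_ok n u J" and cS: "card S0 \<le> n"
  shows "(\<Sum>i\<in>S0. (u$i)^2) \<le> (\<Sum>i\<in>J. (u$i)^2)"
proof -
  define f where "f i = (u$i)^2" for i
  have f0: "\<And>i. f i \<ge> 0" by (simp add: f_def)
  have sp1: "sum f S0 = sum f (S0 \<inter> J) + sum f (S0 - J)"
    by (metis Int_Diff_disjoint Int_Diff_Un finite sum.union_disjoint)
  have sp2: "sum f J = sum f (S0 \<inter> J) + sum f (J - S0)"
    by (metis Int_Diff_disjoint Int_Diff_Un finite sum.union_disjoint inf_commute)
  have JS: "J \<subseteq> support u" and cJ: "card J = min n (card (support u))"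
    and big: "\<forall>i\<in>J. \<forall>j. j \<notin> J \<longrightarrow> \<bar>u $ j\<bar> \<le> \<bar>u $ i\<bar>"
    using idf by (auto simp: identify_ok_def)
  have "sum f (S0 - J) \<le> sum f (J - S0)"
  proof (cases "n \<le> card (support u)")
    case False
    hence "card J = card (support u)" using cJ by simp
    hence "J = support u" using JS by (simp add: card_subset_eq)
    hence "\<forall>i\<in>S0 - J. f i = 0" by (auto simp: support_def f_def)
    hence "sum f (S0 - J) = 0" by simp
    thus ?thesis using f0 by (simp add: sum_nonneg)
  next
    case True
    hence cJn: "card J = n" using cJ by simp
    have c1: "card S0 = card (S0 \<inter> J) + card (S0 - J)"
      by (metis Int_Diff_disjoint Int_Diff_Un card_Un_disjoint finite)
    have c2: "card J = card (S0 \<inter> J) + card (J - S0)"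
      by (metis Int_Diff_disjoint Int_Diff_Un card_Un_disjoint finite inf_commute)
    have cc: "card (S0 - J) \<le> card (J - S0)" using c1 c2 cS cJn by linarith
    show ?thesis
    proof (cases "S0 - J = {}")
      case True show ?thesis unfolding True using f0 by (simp add: sum_nonneg)
    next
      case False
      hence ne: "J - S0 \<noteq> {}" using cc by (metis card_0_eq finite le_zero_eq)
      define \<mu> where "\<mu> = Min (f ` (J - S0))"
      have "\<mu> \<in> f ` (J - S0)" unfolding \<mu>_def using ne by (intro Min_in) auto
      then obtain k where k: "k \<in> J - S0" "f k = \<mu>" by auto
      have lo: "\<forall>i\<in>S0 - J. f i \<le> \<mu>"
      proof
        fix i assume "i \<in> S0 - J"
        hence "\<bar>u$i\<bar> \<le> \<bar>u$k\<bar>" using big k by auto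
        hence "(u$i)^2 \<le> (u$k)^2" by (simp add: abs_le_square_iff)
        thus "f i \<le> \<mu>" using k by (simp add: f_def)
      qed
      have hi: "\<forall>i\<in>J - S0. \<mu> \<le> f i" unfolding \<mu>_def by simp
      have "sum f (S0 - J) \<le> real (card (S0 - J)) * \<mu>" using lo by (intro sum_bounded_above) blast
      also have "\<dots> \<le> real (card (J - S0)) * \<mu>"
        using cc k f0 by (intro mult_right_mono) auto
      also have "\<dots> \<le> sum f (J - S0)" using hi by (intro sum_bounded_below) blast
      finally show ?thesis .
    qed
  qed
  thus ?thesis using sp1 sp2 by (simp add: f_def)
qed

lemma ln_ge: "n \<ge> (2::nat) \<Longrightarrow> ln (real n) \<ge> 2/3"
proof -
  assume "n \<ge> 2"
  hence "ln 2 \<le> ln (real n)" by simp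
  thus ?thesis using ln2_ge_two_thirds by linarith
qed

lemma key_const:
  fixes n :: nat and e :: real
  assumes n2: "n \<ge> 2" and eps_def: "e = 0.03 / sqrt (ln (real n))"
  shows "0 < e" "e \<le> 0.0375"
    "\<exists>j. real n \<le> 4^j \<and> 32*4.16^2*e^2*real (j+1) \<le> 3*(1-4.16*e)^2"
proof -
  define L where "L = ln (real n)"
  have L: "L \<ge> 2/3" unfolding L_def using ln_ge[OF n2] .
  have sL: "sqrt L \<ge> 0.8"
  proof -
    have "sqrt 0.64 \<le> sqrt L" using L by (subst real_sqrt_le_iff) simp
    moreover have "sqrt (0.64::real) = 0.8" by (rule real_sqrt_unique) (simp_all add: power2_eq_square)
    ultimately show ?thesis by linarith
  qed
  show e0: "0 < e" using sL L by (simp add: eps_def L_def[symmetric])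
  have "e \<le> 0.03 / 0.8" unfolding eps_def L_def[symmetric] using sL L by (intro divide_left_mono) auto
  thus e1: "e \<le> 0.0375" by simp
  have e2: "e^2 = 0.0009 / L"
    using L by (simp add: eps_def L_def[symmetric] power_divide)
  have "n < 2^n" by (rule less_exp)
  also have "(2::nat)^n \<le> 4^n" by (rule power_mono) auto
  finally have ex: "\<exists>j::nat. n \<le> 4^j" by (intro exI[of _ n]) simp
  define j where "j = (LEAST j::nat. n \<le> 4^j)"
  have nj: "n \<le> 4^j" unfolding j_def using LeastI_ex[OF ex] .
  have j0: "j \<noteq> 0"
  proof
    assume "j = 0" thus False using nj n2 by simp
  qed
  have "\<not> n \<le> 4^(j-1)" unfolding j_def by (rule not_less_Least) (use j0 in \<open>simp add: j_def\<close>)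
  hence lt: "real (4^(j-1)) < real n" by simp
  have "ln (real (4^(j-1))) < L" unfolding L_def using lt by (subst ln_less_cancel_iff) auto
  hence "real (j-1) * ln 4 < L" by (simp add: ln_realpow)
  moreover have "ln (4::real) \<ge> 4/3"
  proof -
    have "ln (4::real) = ln 2 + ln 2" using ln_realpow[of "2::real" 2] by simp
    thus ?thesis using ln2_ge_two_thirds by linarith
  qed
  ultimately have "real (j-1) * (4/3) < L"
    by (smt (verit) mult_left_mono of_nat_0_le_iff)
  hence jb: "real (j+1) \<le> 0.75*L + 2" using j0 by (simp add: of_nat_diff)
  have "32*4.16^2*e^2*real (j+1) \<le> 32*4.16^2*(0.0009/L)*(0.75*L+2)"
    unfolding e2 using jb L by (intro mult_left_mono) auto
  also have "\<dots> = 0.37380096 + 0.99680256/L" using L by (simp add: field_simps)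
  also have "\<dots> \<le> 0.37380096 + 0.99680256/(2/3)"
    using L by (intro add_left_mono divide_left_mono) auto
  also have "\<dots> \<le> 3*(1-4.16*0.0375)^2" by (simp add: power2_eq_square)
  also have "\<dots> \<le> 3*(1-4.16*e)^2" using e1 e0 by (intro mult_left_mono power_mono) auto
  finally show "\<exists>j. real n \<le> 4^j \<and> 32*4.16^2*e^2*real (j+1) \<le> 3*(1-4.16*e)^2"
    using nj by (intro exI[of _ j]) (simp add: of_nat_le_iff[symmetric])
qed

lemma consist2:
  fixes Phi :: "real^'d^'N" and v y :: "real^'d"
  assumes ric: "RIC Phi (2*n) e" and e0: "0 \<le> e" and e1: "e \<le> 0.0375"
    and lsq: "lsq_min Phi (Phi *v v) I y"
    and card: "card (I \<union> support v) \<le> 2*n"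
    and cT: "card T \<le> 2*n"
  shows "norm (restr T (transpose Phi *v (Phi *v restr (support v - I) v) - transpose Phi *v (Phi *v v - Phi *v y)))
          \<le> 2.16*e * norm (restr (support v - I) v)"
proof -
  define X where "X = norm (restr T (transpose Phi *v (Phi *v restr (support v - I) v) - transpose Phi *v (Phi *v v - Phi *v y)))"
  define V where "V = norm (restr (support v - I) v)"
  have V0: "V \<ge> 0" by (simp add: V_def)
  have h: "(1-e)*X \<le> 2*e*(1+e)*V" unfolding X_def V_def
    by (rule consist[OF ric e0 _ lsq card cT]) (use e1 in simp)
  have "2*e*(1+e)*V \<le> (1-e)*(2.16*e*V)"
  proof -
    have "(1-e)*(2.16*e*V) - 2*e*(1+e)*V = (e*V)*(0.16 - 4.16*e)" by (simp add: field_simps)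
    moreover have "(e*V)*(0.16 - 4.16*e) \<ge> 0" using e0 e1 V0 by simp
    ultimately show ?thesis by linarith
  qed
  with h have "(1-e)*X \<le> (1-e)*(2.16*e*V)" by linarith
  moreover have "1 - e > 0" using e1 by simp
  ultimately have "X \<le> 2.16*e*V" by simp
  thus ?thesis by (simp add: X_def V_def)
qed

lemma inv_card:
  assumes "card (I - S) \<le> card (I \<inter> S)" and "card S \<le> n"
  shows "card (I \<union> (S::'d::finite set)) \<le> 2*n"
proof -
  have "I \<union> S = S \<union> (I - S)" by blast
  moreover have "card (S \<union> (I - S)) = card S + card (I - S)" by (rule card_Un_disjoint) auto
  ultimately have "card (I \<union> S) = card S + card (I - S)" by simp
  moreover have "card (I \<inter> S) \<le> card S" by (simp add: card_mono)
  ultimately show ?thesis using assms by linarith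
qed

lemma inv_step:
  fixes Phi :: "real^'d^'N" and v y :: "real^'d"
  assumes ric: "RIC Phi (2*n) e" and e0: "0 < e" and e1: "e \<le> 0.0375"
    and vs: "sparse n v"
    and lsq: "lsq_min Phi (Phi *v v) I y"
    and inv: "card (I - support v) \<le> card (I \<inter> support v)"
    and nj: "real n \<le> 4^j" and kc: "32*4.16^2*e^2*real (j+1) \<le> 3*(1-4.16*e)^2"
    and idf: "identify_ok n (transpose Phi *v (Phi *v v - Phi *v y)) J"
    and reg: "regularize_ok (transpose Phi *v (Phi *v v - Phi *v y)) J J0"
  shows "card ((I \<union> J0) - support v) \<le> card ((I \<union> J0) \<inter> support v)"
proof -
  define S where "S = support v"
  define S0 where "S0 = S - I"
  define v0 where "v0 = restr S0 v"
  define V where "V = norm v0"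
  define r where "r = Phi *v v - Phi *v y"
  define u where "u = transpose Phi *v r"
  define u0 where "u0 = transpose Phi *v (Phi *v v0)"
  define E where "E A = (\<Sum>i\<in>A. (u$i)^2)" for A
  have EN: "E A = norm (restr A u)^2" for A by (simp add: E_def norm_restr_sq)
  have V0: "V \<ge> 0" by (simp add: V_def)
  have cS: "card S \<le> n" using vs by (simp add: sparse_def S_def)
  have cIS: "card (I \<union> S) \<le> 2*n" using inv_card[OF inv[folded S_def] cS] .
  have C: "norm (restr T u0 - restr T u) \<le> 2.16*e*V" if "card T \<le> 2*n" for T
    using consist2[OF ric _ e1 lsq cIS[unfolded S_def] that] e0
    by (simp add: restr_diff[symmetric] u0_def u_def v0_def S0_def S_def V_def r_def)
  have sv0: "support v0 \<subseteq> S0" unfolding v0_def by (rule support_restr)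
  have cS0: "card S0 \<le> n" using cS card_mono[of S S0] by (simp add: S0_def)
  have uI: "u$i = 0" if "i \<in> I" for i
  proof -
    have sa: "support (axis i (1::real)) \<subseteq> I" using that by (auto simp: support_def axis_def)
    have "u$i = inner u (axis i 1)" by (simp add: inner_axis)
    also have "\<dots> = inner r (Phi *v axis i 1)" unfolding u_def by (rule inner_transpose)
    also have "\<dots> = 0" unfolding r_def using lsq_orth[OF lsq sa] by simp
    finally show ?thesis .
  qed
  have JS: "J \<subseteq> support u" and cJ: "card J \<le> n" using idf by (auto simp: identify_ok_def u_def r_def)
  have JI: "J \<inter> I = {}" using JS uI by (auto simp: support_def)
  have J0J: "J0 \<subseteq> J" and comp: "comparable u J0"
    and opt: "\<And>J1. J1 \<subseteq> J \<Longrightarrow> comparable u J1 \<Longrightarrow> norm (restr J1 u) \<le> norm (restr J0 u)"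
    using reg by (auto simp: regularize_ok_def u_def r_def)
  have cJ0: "card J0 \<le> n" using cJ card_mono[OF _ J0J] by simp
  have loc: "((1-4.16*e)*V)^2 \<le> E J"
  proof -
    have "(1-e)^2 * V^2 \<le> norm (Phi *v v0)^2"
    proof -
      have "sparse (2*n) v0" by (rule sparse_mono[OF sv0]) (use cS0 in simp)
      thus ?thesis unfolding V_def by (rule ric_lower[OF ric]) (use e1 in simp)
    qed
    also have "norm (Phi *v v0)^2 = inner (Phi *v v0) (Phi *v v0)" by (simp add: power2_norm_eq_inner)
    also have "\<dots> = inner u0 v0" unfolding u0_def by (rule inner_transpose[symmetric])
    also have "\<dots> = inner (restr S0 u0) v0" by (rule inner_restr_supp[OF sv0, symmetric])
    also have "\<dots> \<le> norm (restr S0 u0) * V" unfolding V_def by (rule norm_cauchy_schwarz)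
    finally have a: "(1-e)^2 * V^2 \<le> norm (restr S0 u0) * V" .
    have b: "(1-e)^2 * V \<le> norm (restr S0 u0)"
    proof (cases "V = 0")
      case True thus ?thesis by simp
    next
      case False hence "V > 0" using V0 by simp
      thus ?thesis using a by (simp add: power2_eq_square mult.assoc[symmetric])
    qed
    have "norm (restr S0 u0) - norm (restr S0 u) \<le> norm (restr S0 u0 - restr S0 u)" by (rule norm_triangle_ineq2)
    also have "\<dots> \<le> 2.16*e*V" using C cS0 by simp
    finally have c: "(1-e)^2 * V - 2.16*e*V \<le> norm (restr S0 u)" using b by linarith
    have "(1-4.16*e)*V \<le> (1-e)^2 * V - 2.16*e*V"
    proof -
      have eq: "(1-e)^2 * V - 2.16*e*V = (1-4.16*e)*V + e^2 * V" by (simp add: power2_eq_square algebra_simps)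
      show ?thesis unfolding eq using V0 by simp
    qed
    also have "\<dots> \<le> norm (restr S0 u)" by (rule c)
    also have "\<dots> \<le> norm (restr J u)"
    proof -
      have "norm (restr S0 u)^2 \<le> norm (restr J u)^2"
        using topn[OF idf cS0] by (simp add: norm_restr_sq u_def r_def)
      thus ?thesis by (rule power2_le_imp_le) simp
    qed
    finally have "(1-4.16*e)*V \<le> norm (restr J u)" .
    moreover have "0 \<le> (1-4.16*e)*V" using e1 V0 by simp
    ultimately show ?thesis unfolding EN by (rule power_mono)
  qed
  obtain A where A: "A \<subseteq> J" "comparable u A" "3 * E J \<le> 4*real (j+1) * E A"
    using dyadic[OF cJ nj, of u] unfolding E_def by blast
  have EA: "E A \<le> E J0"
  proof -
    have "norm (restr A u) \<le> norm (restr J0 u)" using opt A by blast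
    hence "norm (restr A u)^2 \<le> norm (restr J0 u)^2" by (rule power_mono) simp
    thus ?thesis by (simp add: EN)
  qed
  have main: "card (J0 - S) \<le> card (J0 \<inter> S)"
  proof (rule ccontr)
    assume "\<not> ?thesis"
    hence lt: "card (J0 \<inter> S) < card (J0 - S)" by simp
    define D where "D = J0 - S"
    have DJ0: "D \<subseteq> J0" by (auto simp: D_def)
    have cJ0D: "card J0 = card D + card (J0 \<inter> S)"
      unfolding D_def by (metis Int_Diff_disjoint Int_Diff_Un card_Un_disjoint finite inf_commute add.commute)
    have Dne: "D \<noteq> {}" using lt unfolding D_def by (metis card.empty less_nat_zero_code)
    hence J0ne: "J0 \<noteq> {}" using DJ0 by blast
    define M where "M = Max ((\<lambda>i. \<bar>u$i\<bar>) ` J0)"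
    have "M \<in> (\<lambda>i. \<bar>u$i\<bar>) ` J0" unfolding M_def using J0ne by (intro Max_in) auto
    then obtain i1 where i1: "i1 \<in> J0" "\<bar>u$i1\<bar> = M" by auto
    have leM: "\<bar>u$i\<bar> \<le> M" if "i \<in> J0" for i unfolding M_def using that by simp
    obtain d where d: "d \<in> D" using Dne by blast
    have "u$d \<noteq> 0" using d DJ0 J0J JS by (auto simp: support_def)
    hence Mp: "M > 0" using leM[of d] d DJ0 by force
    have "E J0 \<le> real (card J0) * M^2"
      unfolding E_def
    proof (intro sum_bounded_above)
      fix i assume "i \<in> J0"
      hence "\<bar>u$i\<bar> \<le> \<bar>M\<bar>" using leM Mp by simp
      thus "(u$i)^2 \<le> M^2" using abs_le_square_iff by blast
    qed
    also have "\<dots> < real (2*card D) * M^2"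
      using cJ0D lt Mp by (intro mult_strict_right_mono) (auto simp: D_def)
    also have "\<dots> = 8 * (real (card D) * (M/2)^2)" by (simp add: power2_eq_square)
    also have "\<dots> \<le> 8 * E D"
    proof -
      have "real (card D) * (M/2)^2 \<le> E D"
        unfolding E_def
      proof (intro sum_bounded_below)
        fix i assume "i \<in> D"
        hence "M \<le> 2*\<bar>u$i\<bar>" using comp i1 DJ0 unfolding comparable_def by force
        hence "\<bar>M/2\<bar> \<le> \<bar>u$i\<bar>" using Mp by simp
        thus "(M/2)^2 \<le> (u$i)^2" using abs_le_square_iff by blast
      qed
      thus ?thesis by simp
    qed
    finally have J0D: "E J0 < 8 * E D" .
    have cD: "card D \<le> n" using cJ0 card_mono[OF _ DJ0] by simp
    have zb: "norm (restr D u0) \<le> 2*e*V"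
    proof -
      define z where "z = restr D u0"
      have sz: "support z \<subseteq> D" unfolding z_def by (rule support_restr)
      have disj: "support v0 \<inter> support z = {}" using sv0 sz by (auto simp: D_def S0_def)
      have cu: "card (support v0 \<union> support z) \<le> 2*n"
      proof -
        have "card (support v0 \<union> support z) \<le> card (S0 \<union> D)"
          using sv0 sz by (intro card_mono) auto
        also have "\<dots> \<le> card S0 + card D" by (rule card_Un_le)
        finally show ?thesis using cS0 cD by linarith
      qed
      have "norm z^2 = inner z z" by (simp add: power2_norm_eq_inner)
      also have "\<dots> = inner u0 z" unfolding z_def by (rule inner_restr_supp[OF sz[unfolded z_def]])
      also have "\<dots> = inner (Phi *v v0) (Phi *v z)" unfolding u0_def by (rule inner_transpose)
      also have "\<dots> \<le> 2*e*norm v0*norm z"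
        using near_orth[OF ric _ _ disj cu] e0 e1 by (simp add: abs_le_iff)
      finally have "norm z * norm z \<le> norm z * (2*e*V)" by (simp add: V_def power2_eq_square algebra_simps)
      hence "norm z \<le> 2*e*V"
      proof (cases "norm z = 0")
        case True thus ?thesis using e0 V0 by simp
      next
        case False hence "norm z > 0" by simp
        thus ?thesis using \<open>norm z * norm z \<le> norm z * (2*e*V)\<close> by simp
      qed
      thus ?thesis by (simp add: z_def)
    qed
    have "norm (restr D u) \<le> norm (restr D u0) + norm (restr D u0 - restr D u)"
      using norm_triangle_ineq4[of "restr D u0" "restr D u0 - restr D u"] by simp
    also have "\<dots> \<le> 2*e*V + 2.16*e*V" by (intro add_mono zb C) (use cD in simp)
    finally have "norm (restr D u) \<le> 4.16*e*V" by (simp add: algebra_simps)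
    hence ED: "E D \<le> (4.16*e*V)^2" unfolding EN by (rule power_mono) simp
    have "3 * E J \<le> 4*real (j+1) * E A" by (rule A(3))
    also have "\<dots> \<le> 4*real (j+1) * E J0" using EA by (intro mult_left_mono) auto
    also have "\<dots> < 4*real (j+1) * (8 * E D)" using J0D by (intro mult_strict_left_mono) auto
    also have "\<dots> \<le> 4*real (j+1) * (8 * (4.16*e*V)^2)" using ED by (intro mult_left_mono) auto
    also have "\<dots> = (32*4.16^2*e^2*real (j+1)) * V^2" unfolding power_mult_distrib by (simp only: ac_simps)
    also have "\<dots> \<le> (3*(1-4.16*e)^2) * V^2" using kc by (intro mult_right_mono) auto
    also have "\<dots> = 3 * ((1-4.16*e)*V)^2" by (simp add: power_mult_distrib)
    also have "\<dots> \<le> 3 * E J" using loc by simp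
    finally show False by simp
  qed
  have IJ0: "I \<inter> J0 = {}" using JI J0J by blast
  have "card ((I \<union> J0) - S) = card (I - S) + card (J0 - S)"
  proof -
    have "(I \<union> J0) - S = (I - S) \<union> (J0 - S)" by blast
    thus ?thesis using IJ0 by (simp add: card_Un_disjoint Int_Diff_disjoint disjoint_iff)
  qed
  moreover have "card ((I \<union> J0) \<inter> S) = card (I \<inter> S) + card (J0 \<inter> S)"
  proof -
    have "(I \<union> J0) \<inter> S = (I \<inter> S) \<union> (J0 \<inter> S)" by blast
    thus ?thesis using IJ0 by (simp add: card_Un_disjoint disjoint_iff)
  qed
  ultimately show ?thesis using main inv by (simp add: S_def)
qed

lemma lsq_empty:
  fixes Phi :: "real^'d^'N"
  shows "lsq_min Phi x {} 0"
proof -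
  have "z = 0" if "support z \<subseteq> {}" for z :: "real^'d"
    using that by (auto simp: support_def vec_eq_iff)
  hence "\<forall>z. support z \<subseteq> {} \<longrightarrow> norm (x - Phi *v 0) \<le> norm (x - Phi *v z)"
  proof (intro allI impI)
    fix z :: "real^'d" assume "support z \<subseteq> {}"
    hence "z = 0" using \<open>\<And>z. support z \<subseteq> {} \<Longrightarrow> z = 0\<close> by blast
    thus "norm (x - Phi *v 0) \<le> norm (x - Phi *v z)" by simp
  qed
  moreover have "support (0::real^'d) \<subseteq> {}" by (simp add: support_def)
  ultimately show ?thesis unfolding lsq_min_def by blast
qed

theorem lemma3p5:
  fixes Phi :: "real^'d^'N" and v :: "real^'d" and n :: nat
    and I :: "'d set" and r :: "real^'N" and T :: "'d set" and eps :: real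
  assumes n2: "n \<ge> 2"
    and eps_def: "eps = 0.03 / sqrt (ln (real n))"
    and ric: "RIC Phi (2 * n) eps"
    and v_nz: "v \<noteq> 0" and v_sparse: "sparse n v"
    and iter: "romp_reach Phi n (Phi *v v) (I, r)"
    and r_nz: "r \<noteq> 0"
    and T_card: "card T \<le> 2 * n"
  shows "norm (restr T (transpose Phi *v (Phi *v restr (support v - I) v) - transpose Phi *v r))
           \<le> 2.4 * eps * norm (restr (support v - I) v)"
proof -
  have e0: "0 < eps" and e1: "eps \<le> 0.0375" using key_const[OF n2 eps_def] by auto
  obtain j where nj: "real n \<le> 4^j" and kc: "32*4.16^2*eps^2*real (j+1) \<le> 3*(1-4.16*eps)^2"
    using key_const(3)[OF n2 eps_def] by blast
  have inv: "\<exists>y. lsq_min Phi (Phi *v v) (fst s) y \<and> snd s = Phi *v v - Phi *v y \<and>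
              card (fst s - support v) \<le> card (fst s \<inter> support v)"
    if "romp_reach Phi n (Phi *v v) s" for s
    using that
  proof (induction rule: romp_reach.induct)
    case init
    show ?case by (intro exI[of _ 0]) (simp add: lsq_empty)
  next
    case (step s s')
    note st = \<open>romp_step Phi n (Phi *v v) s s'\<close>
    from step.IH obtain y where y: "lsq_min Phi (Phi *v v) (fst s) y" "snd s = Phi *v v - Phi *v y"
      "card (fst s - support v) \<le> card (fst s \<inter> support v)" by blast
    from st obtain J J0 y' where
      idf: "identify_ok n (transpose Phi *v snd s) J" and
      reg: "regularize_ok (transpose Phi *v snd s) J J0" and
      s': "fst s' = fst s \<union> J0" "lsq_min Phi (Phi *v v) (fst s') y'" "snd s' = Phi *v v - Phi *v y'"
      unfolding romp_step_def Let_def by blast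
    have "card ((fst s \<union> J0) - support v) \<le> card ((fst s \<union> J0) \<inter> support v)"
      using inv_step[OF ric e0 e1 v_sparse y(1) y(3) nj kc] idf reg y(2) by simp
    thus ?case using s' by (intro exI[of _ y']) simp
  qed
  from inv[OF iter] obtain y where y: "lsq_min Phi (Phi *v v) I y" "r = Phi *v v - Phi *v y"
      "card (I - support v) \<le> card (I \<inter> support v)" by auto
  have cS: "card (support v) \<le> n" using v_sparse by (simp add: sparse_def)
  have cIS: "card (I \<union> support v) \<le> 2*n" by (rule inv_card[OF y(3) cS])
  have "norm (restr T (transpose Phi *v (Phi *v restr (support v - I) v) - transpose Phi *v r))
          \<le> 2.16*eps * norm (restr (support v - I) v)"
    unfolding y(2) by (rule consist2[OF ric _ e1 y(1) cIS T_card]) (use e0 in simp)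
  also have "\<dots> \<le> 2.4 * eps * norm (restr (support v - I) v)"
    using e0 by (intro mult_right_mono) auto
  finally show ?thesis .
qed
end
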